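(* Let $G$ be a finite group with centre $Z(G)$. Then \[ \frac{1}{|G|^2}\sum_{\chi, \chi' \in \mathrm{Irr}(G)} d_\chi d_{\chi'}\left|\sum_{x \in Z(G)}\chi(x)\overline{\chi'(x)}\right| = 1. \]
   Context: $\mathrm{Irr}(G)$ is the set of irreducible complex characters of $G$ and $d_\chi = \chi(e)$ is the degree of $\chi$. *)

theory Defs
  imports "HOL-Algebra.Group" "Jordan_Normal_Form.Matrix"
begin

definition group_centre :: "('a, 'b) monoid_scheme \<Rightarrow> 'a set" where
  "group_centre G = {z \<in> carrier G. \<forall>g \<in> carrier G. z \<otimes>\<^bsub>G\<^esub> g = g \<otimes>\<^bsub>G\<^esub> z}"

definition mat_trace :: "'a::comm_ring_1 mat \<Rightarrow> 'a" where
  "mat_trace A = (\<Sum>i<dim_row A. A $$ (i, i))"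

definition complex_rep :: "('a, 'b) monoid_scheme \<Rightarrow> nat \<Rightarrow> ('a \<Rightarrow> complex mat) \<Rightarrow> bool" where
  "complex_rep G n \<rho> \<longleftrightarrow> n > 0 \<and>
     (\<forall>g \<in> carrier G. \<rho> g \<in> carrier_mat n n \<and> invertible_mat (\<rho> g)) \<and>
     \<rho> \<one>\<^bsub>G\<^esub> = 1\<^sub>m n \<and>
     (\<forall>g \<in> carrier G. \<forall>h \<in> carrier G. \<rho> (g \<otimes>\<^bsub>G\<^esub> h) = \<rho> g * \<rho> h)"

definition subspace_vec :: "nat \<Rightarrow> complex vec set \<Rightarrow> bool" where
  "subspace_vec n W \<longleftrightarrow> W \<subseteq> carrier_vec n \<and> 0\<^sub>v n \<in> W \<and>
     (\<forall>v \<in> W. \<forall>w \<in> W. v + w \<in> W) \<and> (\<forall>c. \<forall>v \<in> W. c \<cdot>\<^sub>v v \<in> W)"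

definition irreducible_rep :: "('a, 'b) monoid_scheme \<Rightarrow> nat \<Rightarrow> ('a \<Rightarrow> complex mat) \<Rightarrow> bool" where
  "irreducible_rep G n \<rho> \<longleftrightarrow> complex_rep G n \<rho> \<and>
     (\<forall>W. subspace_vec n W \<and> (\<forall>g \<in> carrier G. \<forall>w \<in> W. \<rho> g *\<^sub>v w \<in> W)
        \<longrightarrow> W = {0\<^sub>v n} \<or> W = carrier_vec n)"

definition character :: "('a, 'b) monoid_scheme \<Rightarrow> ('a \<Rightarrow> complex mat) \<Rightarrow> 'a \<Rightarrow> complex" where
  "character G \<rho> = (\<lambda>g. if g \<in> carrier G then mat_trace (\<rho> g) else 0)"

definition Irr :: "('a, 'b) monoid_scheme \<Rightarrow> ('a \<Rightarrow> complex) set" where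
  "Irr G = {\<chi>. \<exists>n \<rho>. irreducible_rep G n \<rho> \<and> \<chi> = character G \<rho>}"

definition char_degree :: "('a, 'b) monoid_scheme \<Rightarrow> ('a \<Rightarrow> complex) \<Rightarrow> complex" where
  "char_degree G \<chi> = \<chi> \<one>\<^bsub>G\<^esub>"

end

theory Submission
  imports Defs "Jordan_Normal_Form.DL_Rank" "Jordan_Normal_Form.Spectral_Radius"
begin

lemma mat_trace_mult_comm:
  assumes A: "A \<in> carrier_mat n m" and B: "B \<in> carrier_mat m n"
  shows "mat_trace (A * B) = mat_trace (B * A)"
proof -
  have "mat_trace (A * B) = (\<Sum>i<n. \<Sum>j<m. A $$ (i,j) * B $$ (j,i))"
    using A B unfolding mat_trace_def
    by (auto simp: scalar_prod_def lessThan_atLeast0 intro!: sum.cong)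
  also have "\<dots> = (\<Sum>j<m. \<Sum>i<n. B $$ (j,i) * A $$ (i,j))"
    by (subst sum.swap) (simp add: mult.commute)
  also have "\<dots> = mat_trace (B * A)"
    using A B unfolding mat_trace_def
    by (auto simp: scalar_prod_def lessThan_atLeast0 intro!: sum.cong)
  finally show ?thesis .
qed

lemma mat_trace_one[simp]: "mat_trace (1\<^sub>m n :: 'a::comm_ring_1 mat) = of_nat n"
  unfolding mat_trace_def by simp

lemma mat_trace_smult_one: "mat_trace (c \<cdot>\<^sub>m 1\<^sub>m n :: 'a::comm_ring_1 mat) = of_nat n * c"
  unfolding mat_trace_def by simp

context group
begin

lemma rep_carrier: "complex_rep G n \<rho> \<Longrightarrow> g \<in> carrier G \<Longrightarrow> \<rho> g \<in> carrier_mat n n"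
  unfolding complex_rep_def by auto

lemma rep_mult: "complex_rep G n \<rho> \<Longrightarrow> g \<in> carrier G \<Longrightarrow> h \<in> carrier G \<Longrightarrow> \<rho> (g \<otimes> h) = \<rho> g * \<rho> h"
  unfolding complex_rep_def by auto

lemma rep_one: "complex_rep G n \<rho> \<Longrightarrow> \<rho> \<one> = 1\<^sub>m n"
  unfolding complex_rep_def by auto

lemma rep_pos: "complex_rep G n \<rho> \<Longrightarrow> n > 0"
  unfolding complex_rep_def by auto

lemma rep_inv_l: "complex_rep G n \<rho> \<Longrightarrow> g \<in> carrier G \<Longrightarrow> \<rho> (inv g) * \<rho> g = 1\<^sub>m n"
  by (metis rep_mult rep_one inv_closed l_inv)

lemma rep_inv_r: "complex_rep G n \<rho> \<Longrightarrow> g \<in> carrier G \<Longrightarrow> \<rho> g * \<rho> (inv g) = 1\<^sub>m n"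
  by (metis rep_mult rep_one inv_closed r_inv)

lemma character_one: "complex_rep G n \<rho> \<Longrightarrow> character G \<rho> \<one> = of_nat n"
  unfolding character_def by (simp add: rep_one)

lemma mult_bij: "h \<in> carrier G \<Longrightarrow> bij_betw (\<lambda>g. h \<otimes> g) (carrier G) (carrier G)"
  unfolding bij_betw_def
proof
  assume h: "h \<in> carrier G"
  show "inj_on ((\<otimes>) h) (carrier G)" using h by (auto intro: inj_onI)
  show "(\<otimes>) h ` carrier G = carrier G"
  proof
    show "(\<otimes>) h ` carrier G \<subseteq> carrier G" using h by auto
    show "carrier G \<subseteq> (\<otimes>) h ` carrier G"
    proof
      fix x assume x: "x \<in> carrier G"
      have "x = h \<otimes> (inv h \<otimes> x)" using h x by (simp add: m_assoc[symmetric])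
      then show "x \<in> (\<otimes>) h ` carrier G" using h x by blast
    qed
  qed
qed

end


lemma mult_summat_left:
  fixes M :: "'i \<Rightarrow> 'a::comm_ring_1 mat"
  assumes A: "A \<in> carrier_mat p n" and M: "\<And>g. g \<in> S \<Longrightarrow> M g \<in> carrier_mat n m"
  shows "A * mat n m (\<lambda>ij. \<Sum>g\<in>S. M g $$ ij) = mat p m (\<lambda>ij. \<Sum>g\<in>S. (A * M g) $$ ij)"
proof (rule eq_matI)
  fix i j assume i: "i < dim_row (mat p m (\<lambda>ij. \<Sum>g\<in>S. (A * M g) $$ ij))"
    and j: "j < dim_col (mat p m (\<lambda>ij. \<Sum>g\<in>S. (A * M g) $$ ij))"
  then have i: "i < p" and j: "j < m" by auto
  have "(A * mat n m (\<lambda>ij. \<Sum>g\<in>S. M g $$ ij)) $$ (i, j) = (\<Sum>k\<in>{0..<n}. A $$ (i,k) * (\<Sum>g\<in>S. M g $$ (k,j)))"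
    using A i j by (simp add: scalar_prod_def)
  also have "\<dots> = (\<Sum>g\<in>S. \<Sum>k\<in>{0..<n}. A $$ (i,k) * M g $$ (k,j))"
    by (simp add: sum_distrib_left sum.swap[of _ S])
  also have "\<dots> = (\<Sum>g\<in>S. (A * M g) $$ (i,j))"
  proof (intro sum.cong refl)
    fix g assume "g \<in> S"
    with M have "M g \<in> carrier_mat n m" by auto
    then show "(\<Sum>k\<in>{0..<n}. A $$ (i,k) * M g $$ (k,j)) = (A * M g) $$ (i,j)"
      using A i j by (simp add: scalar_prod_def)
  qed
  finally show "(A * mat n m (\<lambda>ij. \<Sum>g\<in>S. M g $$ ij)) $$ (i, j) = mat p m (\<lambda>ij. \<Sum>g\<in>S. (A * M g) $$ ij) $$ (i, j)"
    using i j by simp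
qed (use A in auto)

lemma mult_summat_right:
  fixes M :: "'i \<Rightarrow> 'a::comm_ring_1 mat"
  assumes A: "A \<in> carrier_mat m p" and M: "\<And>g. g \<in> S \<Longrightarrow> M g \<in> carrier_mat n m"
  shows "mat n m (\<lambda>ij. \<Sum>g\<in>S. M g $$ ij) * A = mat n p (\<lambda>ij. \<Sum>g\<in>S. (M g * A) $$ ij)"
proof (rule eq_matI)
  fix i j assume i: "i < dim_row (mat n p (\<lambda>ij. \<Sum>g\<in>S. (M g * A) $$ ij))"
    and j: "j < dim_col (mat n p (\<lambda>ij. \<Sum>g\<in>S. (M g * A) $$ ij))"
  then have i: "i < n" and j: "j < p" by auto
  have "(mat n m (\<lambda>ij. \<Sum>g\<in>S. M g $$ ij) * A) $$ (i, j) = (\<Sum>k\<in>{0..<m}. (\<Sum>g\<in>S. M g $$ (i,k)) * A $$ (k,j))"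
    using A i j by (simp add: scalar_prod_def)
  also have "\<dots> = (\<Sum>g\<in>S. \<Sum>k\<in>{0..<m}. M g $$ (i,k) * A $$ (k,j))"
    by (simp add: sum_distrib_right sum.swap[of _ S])
  also have "\<dots> = (\<Sum>g\<in>S. (M g * A) $$ (i,j))"
  proof (intro sum.cong refl)
    fix g assume "g \<in> S"
    with M have "M g \<in> carrier_mat n m" by auto
    then show "(\<Sum>k\<in>{0..<m}. M g $$ (i,k) * A $$ (k,j)) = (M g * A) $$ (i,j)"
      using A i j by (simp add: scalar_prod_def)
  qed
  finally show "(mat n m (\<lambda>ij. \<Sum>g\<in>S. M g $$ ij) * A) $$ (i, j) = mat n p (\<lambda>ij. \<Sum>g\<in>S. (M g * A) $$ ij) $$ (i, j)"
    using i j by simp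
qed (use A in auto)

lemma assoc4:
  assumes "A \<in> carrier_mat n n" "B \<in> carrier_mat n n" "X \<in> carrier_mat n m" "C \<in> carrier_mat m m"
  shows "A * B * X * C = A * (B * X * C)"
proof -
  have BX: "B * X \<in> carrier_mat n m" using assms by simp
  have "A * B * X = A * (B * X)" by (rule assoc_mult_mat[OF assms(1,2,3)])
  then have "A * B * X * C = A * (B * X) * C" by simp
  also have "\<dots> = A * (B * X * C)" by (rule assoc_mult_mat[OF assms(1) BX assms(4)])
  finally show ?thesis .
qed

context group
begin

definition avg :: "('a \<Rightarrow> complex mat) \<Rightarrow> ('a \<Rightarrow> complex mat) \<Rightarrow> nat \<Rightarrow> nat \<Rightarrow> complex mat \<Rightarrow> complex mat" where
  "avg \<rho> \<sigma> n m X = mat n m (\<lambda>ij. \<Sum>g\<in>carrier G. (\<rho> g * X * \<sigma> (inv g)) $$ ij)"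

lemma avg_carrier: "avg \<rho> \<sigma> n m X \<in> carrier_mat n m"
  unfolding avg_def by simp

lemma avg_intertwine:
  assumes r: "complex_rep G n \<rho>" and s: "complex_rep G m \<sigma>" and X: "X \<in> carrier_mat n m"
    and h: "h \<in> carrier G"
  shows "\<rho> h * avg \<rho> \<sigma> n m X = avg \<rho> \<sigma> n m X * \<sigma> h"
proof -
  have cr: "\<And>g. g \<in> carrier G \<Longrightarrow> \<rho> g \<in> carrier_mat n n" using r by (rule rep_carrier)
  have cs: "\<And>g. g \<in> carrier G \<Longrightarrow> \<sigma> g \<in> carrier_mat m m" using s by (rule rep_carrier)
  define F where "F = (\<lambda>g. \<rho> g * X * \<sigma> (inv g \<otimes> h))"
  have "\<rho> h * avg \<rho> \<sigma> n m X = mat n m (\<lambda>ij. \<Sum>g\<in>carrier G. (\<rho> h * (\<rho> g * X * \<sigma> (inv g))) $$ ij)"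
    unfolding avg_def using cr cs X h by (intro mult_summat_left) (auto intro!: mult_carrier_mat)
  also have "\<dots> = mat n m (\<lambda>ij. \<Sum>g\<in>carrier G. F (h \<otimes> g) $$ ij)"
  proof -
    have "\<And>g. g \<in> carrier G \<Longrightarrow> \<rho> h * (\<rho> g * X * \<sigma> (inv g)) = F (h \<otimes> g)"
    proof -
      fix g assume g: "g \<in> carrier G"
      have "inv (h \<otimes> g) \<otimes> h = inv g" using g h by (simp add: inv_mult_group m_assoc)
      then have "F (h \<otimes> g) = \<rho> (h \<otimes> g) * X * \<sigma> (inv g)" unfolding F_def by simp
      also have "\<dots> = \<rho> h * (\<rho> g * X * \<sigma> (inv g))"
        unfolding rep_mult[OF r h g] by (rule assoc4[OF cr[OF h] cr[OF g] X cs[OF inv_closed[OF g]]])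
      finally show "\<rho> h * (\<rho> g * X * \<sigma> (inv g)) = F (h \<otimes> g)" by simp
    qed
    then show ?thesis by (intro cong_mat refl sum.cong) auto
  qed
  also have "\<dots> = mat n m (\<lambda>ij. \<Sum>g\<in>carrier G. F g $$ ij)"
  proof -
    have "\<And>ij. (\<Sum>g\<in>carrier G. F (h \<otimes> g) $$ ij) = (\<Sum>g\<in>carrier G. F g $$ ij)"
      using sum.reindex_bij_betw[OF mult_bij[OF h], of "\<lambda>g. F g $$ _"] by simp
    then show ?thesis by simp
  qed
  also have "\<dots> = mat n m (\<lambda>ij. \<Sum>g\<in>carrier G. (\<rho> g * X * \<sigma> (inv g) * \<sigma> h) $$ ij)"
  proof -
    have "\<And>g. g \<in> carrier G \<Longrightarrow> F g = \<rho> g * X * \<sigma> (inv g) * \<sigma> h"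
      unfolding F_def using h cs X cr
      by (subst rep_mult[OF s]) (auto intro!: assoc_mult_mat[symmetric] mult_carrier_mat)
    then show ?thesis by (intro cong_mat refl sum.cong) auto
  qed
  also have "\<dots> = avg \<rho> \<sigma> n m X * \<sigma> h"
    unfolding avg_def using cr cs X h by (intro mult_summat_right[symmetric]) (auto intro!: mult_carrier_mat)
  finally show ?thesis .
qed

end


lemma mat_vec_zero: "A \<in> carrier_mat n m \<Longrightarrow> A *\<^sub>v 0\<^sub>v m = (0\<^sub>v n :: 'a::comm_ring_1 vec)"
  by (intro eq_vecI) (auto simp: scalar_prod_def)

lemma mat_vec_unit_index:
  fixes M :: "'a::comm_ring_1 mat"
  assumes "M \<in> carrier_mat p q" "i < p" "j < q"
  shows "(M *\<^sub>v unit_vec q j) $ i = M $$ (i, j)"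
  using assms by simp

lemma mat_eq_by_unit:
  fixes M :: "'a::comm_ring_1 mat"
  assumes M: "M \<in> carrier_mat p q" and N: "N \<in> carrier_mat p q"
    and e: "\<And>j. j < q \<Longrightarrow> M *\<^sub>v unit_vec q j = N *\<^sub>v unit_vec q j"
  shows "M = N"
proof (rule eq_matI)
  fix i j assume i: "i < dim_row N" and j: "j < dim_col N"
  then have "(M *\<^sub>v unit_vec q j) $ i = (N *\<^sub>v unit_vec q j) $ i" using e N by auto
  then show "M $$ (i, j) = N $$ (i, j)" using M N i j by (simp add: mat_vec_unit_index)
qed (use M N in auto)

lemma zero_by_unit:
  fixes M :: "'a::comm_ring_1 mat"
  assumes M: "M \<in> carrier_mat p q" and e: "\<And>j. j < q \<Longrightarrow> M *\<^sub>v unit_vec q j = 0\<^sub>v p"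
  shows "M = 0\<^sub>m p q"
  by (rule mat_eq_by_unit[OF M zero_carrier_mat]) (use e M in \<open>auto simp: mat_vec_zero\<close>)

context group
begin

lemma irr_rep: "irreducible_rep G n \<rho> \<Longrightarrow> complex_rep G n \<rho>"
  unfolding irreducible_rep_def by auto

lemma irr_sub:
  assumes "irreducible_rep G n \<rho>" "subspace_vec n W" "\<And>g w. g \<in> carrier G \<Longrightarrow> w \<in> W \<Longrightarrow> \<rho> g *\<^sub>v w \<in> W"
  shows "W = {0\<^sub>v n} \<or> W = carrier_vec n"
  using assms unfolding irreducible_rep_def by blast

lemma schur_char_eq:
  assumes ir: "irreducible_rep G n \<rho>" and irs: "irreducible_rep G m \<sigma>"
    and A: "A \<in> carrier_mat n m" and comm: "\<And>h. h \<in> carrier G \<Longrightarrow> \<rho> h * A = A * \<sigma> h"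
    and nz: "A \<noteq> 0\<^sub>m n m"
  shows "character G \<rho> = character G \<sigma>"
proof -
  have r: "complex_rep G n \<rho>" and s: "complex_rep G m \<sigma>" using ir irs by (auto intro: irr_rep)
  have cr: "\<And>g. g \<in> carrier G \<Longrightarrow> \<rho> g \<in> carrier_mat n n" using r by (rule rep_carrier)
  have cs: "\<And>g. g \<in> carrier G \<Longrightarrow> \<sigma> g \<in> carrier_mat m m" using s by (rule rep_carrier)
  define K where "K = {v \<in> carrier_vec m. A *\<^sub>v v = 0\<^sub>v n}"
  have subK: "subspace_vec m K"
    unfolding subspace_vec_def K_def using A
    by (auto simp: mat_vec_zero mult_add_distrib_mat_vec mult_mat_vec)
  have invK: "\<sigma> g *\<^sub>v w \<in> K" if g: "g \<in> carrier G" and w: "w \<in> K" for g w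
  proof -
    have wc: "w \<in> carrier_vec m" and Aw: "A *\<^sub>v w = 0\<^sub>v n" using w unfolding K_def by auto
    have "A *\<^sub>v (\<sigma> g *\<^sub>v w) = (A * \<sigma> g) *\<^sub>v w" using A cs[OF g] wc by (simp add: assoc_mult_mat_vec)
    also have "\<dots> = (\<rho> g * A) *\<^sub>v w" using comm[OF g] by simp
    also have "\<dots> = \<rho> g *\<^sub>v (A *\<^sub>v w)" using A cr[OF g] wc by (simp add: assoc_mult_mat_vec)
    also have "\<dots> = 0\<^sub>v n" using Aw cr[OF g] by (simp add: mat_vec_zero)
    finally show ?thesis unfolding K_def using cs[OF g] wc by auto
  qed
  have K0: "K = {0\<^sub>v m}"
  proof -
    have "K \<noteq> carrier_vec m"
    proof
      assume KC: "K = carrier_vec m"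
      have "A = 0\<^sub>m n m"
      proof (rule zero_by_unit[OF A])
        fix j assume "j < m"
        then have "unit_vec m j \<in> K" using KC by simp
        then show "A *\<^sub>v unit_vec m j = 0\<^sub>v n" unfolding K_def by simp
      qed
      with nz show False by simp
    qed
    then show ?thesis using irr_sub[OF irs subK invK] by blast
  qed
  define Im where "Im = {A *\<^sub>v v | v. v \<in> carrier_vec m}"
  have subIm: "subspace_vec n Im"
    unfolding subspace_vec_def Im_def using A
  proof (intro conjI ballI allI)
    show "{A *\<^sub>v v |v. v \<in> carrier_vec m} \<subseteq> carrier_vec n" using A by auto
    show "0\<^sub>v n \<in> {A *\<^sub>v v |v. v \<in> carrier_vec m}" using A by (auto intro!: exI[of _ "0\<^sub>v m"] simp: mat_vec_zero)
  next
    fix v w assume "v \<in> {A *\<^sub>v v |v. v \<in> carrier_vec m}" "w \<in> {A *\<^sub>v v |v. v \<in> carrier_vec m}"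
    then obtain v' w' where "v = A *\<^sub>v v'" "w = A *\<^sub>v w'" "v' \<in> carrier_vec m" "w' \<in> carrier_vec m" by auto
    then show "v + w \<in> {A *\<^sub>v v |v. v \<in> carrier_vec m}" using A
      by (auto intro!: exI[of _ "v' + w'"] simp: mult_add_distrib_mat_vec)
  next
    fix c v assume "v \<in> {A *\<^sub>v v |v. v \<in> carrier_vec m}"
    then obtain v' where "v = A *\<^sub>v v'" "v' \<in> carrier_vec m" by auto
    then show "c \<cdot>\<^sub>v v \<in> {A *\<^sub>v v |v. v \<in> carrier_vec m}" using A
      by (auto intro!: exI[of _ "c \<cdot>\<^sub>v v'"] simp: mult_mat_vec)
  qed
  have invIm: "\<rho> g *\<^sub>v w \<in> Im" if g: "g \<in> carrier G" and w: "w \<in> Im" for g w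
  proof -
    obtain v where v: "v \<in> carrier_vec m" and wv: "w = A *\<^sub>v v" using w unfolding Im_def by auto
    have "\<rho> g *\<^sub>v w = (\<rho> g * A) *\<^sub>v v" using A cr[OF g] v wv by (simp add: assoc_mult_mat_vec)
    also have "\<dots> = (A * \<sigma> g) *\<^sub>v v" using comm[OF g] by simp
    also have "\<dots> = A *\<^sub>v (\<sigma> g *\<^sub>v v)" using A cs[OF g] v by (simp add: assoc_mult_mat_vec)
    finally show ?thesis unfolding Im_def using cs[OF g] v by auto
  qed
  have ImC: "Im = carrier_vec n"
  proof -
    have "Im \<noteq> {0\<^sub>v n}"
    proof
      assume I0: "Im = {0\<^sub>v n}"
      have "A = 0\<^sub>m n m"
      proof (rule zero_by_unit[OF A])
        fix j assume "j < m"
        then have "A *\<^sub>v unit_vec m j \<in> Im" unfolding Im_def by auto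
        then show "A *\<^sub>v unit_vec m j = 0\<^sub>v n" using I0 by simp
      qed
      with nz show False by simp
    qed
    then show ?thesis using irr_sub[OF ir subIm invIm] by blast
  qed
  define c where "c = (\<lambda>i. SOME v. v \<in> carrier_vec m \<and> A *\<^sub>v v = unit_vec n i)"
  have c: "c i \<in> carrier_vec m \<and> A *\<^sub>v c i = unit_vec n i" if "i < n" for i
  proof -
    have "unit_vec n i \<in> Im" using ImC that by simp
    then have "\<exists>v. v \<in> carrier_vec m \<and> A *\<^sub>v v = unit_vec n i" unfolding Im_def by auto
    then show ?thesis unfolding c_def by (rule someI_ex)
  qed
  define C where "C = mat m n (\<lambda>(j, i). c i $ j)"
  have Cc: "C \<in> carrier_mat m n" unfolding C_def by simp
  have colC: "col C i = c i" if "i < n" for i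
    using c[OF that] that unfolding C_def by (auto simp: col_mat)
  have AC: "A * C = 1\<^sub>m n"
  proof (rule eq_matI)
    fix i j assume i: "i < dim_row (1\<^sub>m n :: complex mat)" and j: "j < dim_col (1\<^sub>m n :: complex mat)"
    then have i: "i < n" and j: "j < n" by auto
    have "(A * C) $$ (i, j) = row A i \<bullet> col C j" using A Cc i j by simp
    also have "\<dots> = (A *\<^sub>v c j) $ i" using colC[OF j] A i by simp
    also have "\<dots> = unit_vec n j $ i" using c[OF j] by simp
    finally show "(A * C) $$ (i, j) = 1\<^sub>m n $$ (i, j)" using i j by simp
  qed (use A Cc in auto)
  have CA: "C * A = 1\<^sub>m m"
  proof (rule mat_eq_by_unit)
    show "C * A \<in> carrier_mat m m" using A Cc by simp
    show "1\<^sub>m m \<in> carrier_mat m m" by simp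
    fix j assume j: "j < m"
    define v where "v = (unit_vec m j :: complex vec)"
    have v: "v \<in> carrier_vec m" unfolding v_def by simp
    have CAv: "(C * A) *\<^sub>v v \<in> carrier_vec m" using A Cc v by simp
    have e1: "A * (C * A) = A * C * A" by (rule assoc_mult_mat[symmetric]) (use A Cc in auto)
    have "A *\<^sub>v ((C * A) *\<^sub>v v) = (A * (C * A)) *\<^sub>v v"
      by (rule assoc_mult_mat_vec[symmetric]) (use A Cc v in auto)
    also have "\<dots> = A *\<^sub>v v" using AC A e1 by simp
    finally have "A *\<^sub>v ((C * A) *\<^sub>v v - v) = 0\<^sub>v n"
      using A v CAv by (simp add: mult_minus_distrib_mat_vec)
    then have "(C * A) *\<^sub>v v - v \<in> K" unfolding K_def using CAv v by auto
    then have "(C * A) *\<^sub>v v - v = 0\<^sub>v m" using K0 by simp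
    then have d: "(C * A) *\<^sub>v v - v = 0\<^sub>v m" .
    have "(C * A) *\<^sub>v v = v"
    proof (rule eq_vecI)
      fix i assume "i < dim_vec v"
      then have i: "i < m" using v by simp
      have "((C * A) *\<^sub>v v - v) $ i = 0" using d i by simp
      then show "((C * A) *\<^sub>v v) $ i = v $ i" using CAv v i by simp
    qed (use CAv v Cc in simp)
    then show "(C * A) *\<^sub>v unit_vec m j = 1\<^sub>m m *\<^sub>v unit_vec m j" unfolding v_def by simp
  qed
  show ?thesis
  proof
    fix g
    show "character G \<rho> g = character G \<sigma> g"
    proof (cases "g \<in> carrier G")
      case False then show ?thesis unfolding character_def by simp
    next
      case g: True
      have "mat_trace (\<sigma> g) = mat_trace (C * A * \<sigma> g)" using CA cs[OF g] by simp
      also have "\<dots> = mat_trace (C * (A * \<sigma> g))" using Cc A cs[OF g] by (simp add: assoc_mult_mat)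
      also have "\<dots> = mat_trace (C * (\<rho> g * A))" using comm[OF g] by simp
      also have "\<dots> = mat_trace ((\<rho> g * A) * C)" using Cc A cr[OF g] by (intro mat_trace_mult_comm) auto
      also have "\<dots> = mat_trace (\<rho> g * (A * C))" using Cc A cr[OF g] by (simp add: assoc_mult_mat)
      also have "\<dots> = mat_trace (\<rho> g)" using AC cr[OF g] by simp
      finally show ?thesis unfolding character_def using g by simp
    qed
  qed
qed

lemma schur_scalar:
  assumes ir: "irreducible_rep G n \<rho>" and A: "A \<in> carrier_mat n n"
    and comm: "\<And>h. h \<in> carrier G \<Longrightarrow> \<rho> h * A = A * \<rho> h"
  shows "\<exists>c. A = c \<cdot>\<^sub>m 1\<^sub>m n"
proof -
  have r: "complex_rep G n \<rho>" using ir by (rule irr_rep)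
  have cr: "\<And>g. g \<in> carrier G \<Longrightarrow> \<rho> g \<in> carrier_mat n n" using r by (rule rep_carrier)
  have n: "n > 0" using r by (rule rep_pos)
  obtain c where "c \<in> spectrum A" using spectrum_non_empty[OF A n] by auto
  then obtain v where ev: "eigenvector A v c" unfolding spectrum_def eigenvalue_def by auto
  then have v: "v \<in> carrier_vec n" "v \<noteq> 0\<^sub>v n" "A *\<^sub>v v = c \<cdot>\<^sub>v v"
    unfolding eigenvector_def using A by auto
  define K where "K = {w \<in> carrier_vec n. A *\<^sub>v w = c \<cdot>\<^sub>v w}"
  have subK: "subspace_vec n K"
    unfolding subspace_vec_def K_def using A
    by (auto simp: mat_vec_zero mult_add_distrib_mat_vec mult_mat_vec smult_add_distrib_vec
        smult_smult_assoc mult.commute)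
  have invK: "\<rho> g *\<^sub>v w \<in> K" if g: "g \<in> carrier G" and w: "w \<in> K" for g w
  proof -
    have wc: "w \<in> carrier_vec n" and Aw: "A *\<^sub>v w = c \<cdot>\<^sub>v w" using w unfolding K_def by auto
    have "A *\<^sub>v (\<rho> g *\<^sub>v w) = (A * \<rho> g) *\<^sub>v w" using A cr[OF g] wc by (simp add: assoc_mult_mat_vec)
    also have "\<dots> = (\<rho> g * A) *\<^sub>v w" using comm[OF g] by simp
    also have "\<dots> = \<rho> g *\<^sub>v (A *\<^sub>v w)" using A cr[OF g] wc by (simp add: assoc_mult_mat_vec)
    also have "\<dots> = c \<cdot>\<^sub>v (\<rho> g *\<^sub>v w)" using Aw cr[OF g] wc by (simp add: mult_mat_vec)
    finally show ?thesis unfolding K_def using cr[OF g] wc by auto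
  qed
  have "K \<noteq> {0\<^sub>v n}" using v unfolding K_def by auto
  then have KC: "K = carrier_vec n" using irr_sub[OF ir subK invK] by blast
  have "A = c \<cdot>\<^sub>m 1\<^sub>m n"
  proof (rule mat_eq_by_unit[OF A])
    show "c \<cdot>\<^sub>m 1\<^sub>m n \<in> carrier_mat n n" by simp
    fix j assume j: "j < n"
    have "unit_vec n j \<in> K" using KC by simp
    then have "A *\<^sub>v unit_vec n j = c \<cdot>\<^sub>v unit_vec n j" unfolding K_def by simp
    also have "\<dots> = (c \<cdot>\<^sub>m 1\<^sub>m n) *\<^sub>v unit_vec n j"
      using j by (intro eq_vecI) (auto simp: mat_vec_unit_index[where p=n and q=n])
    finally show "A *\<^sub>v unit_vec n j = (c \<cdot>\<^sub>m 1\<^sub>m n) *\<^sub>v unit_vec n j" .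
  qed
  then show ?thesis by blast
qed

end


definition Emat :: "nat \<Rightarrow> nat \<Rightarrow> nat \<Rightarrow> nat \<Rightarrow> complex mat" where
  "Emat n m j k = mat n m (\<lambda>(a, b). if a = j \<and> b = k then 1 else 0)"

lemma Emat_carrier[simp]: "Emat n m j k \<in> carrier_mat n m"
  unfolding Emat_def by simp

lemma Emat_mult_left:
  assumes A: "A \<in> carrier_mat p n" and j: "j < n" and k: "k < m"
  shows "A * Emat n m j k = mat p m (\<lambda>(i, b). if b = k then A $$ (i, j) else 0)"
proof (rule eq_matI)
  fix i b assume i: "i < dim_row (mat p m (\<lambda>(i, b). if b = k then A $$ (i, j) else 0))"
    and b: "b < dim_col (mat p m (\<lambda>(i, b). if b = k then A $$ (i, j) else 0))"
  then have i: "i < p" and b: "b < m" by auto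
  have "(A * Emat n m j k) $$ (i, b) = (\<Sum>a\<in>{0..<n}. A $$ (i, a) * (if a = j \<and> b = k then 1 else 0))"
    using A i b unfolding Emat_def by (simp add: scalar_prod_def)
  also have "\<dots> = (\<Sum>a\<in>{0..<n}. if a = j then (if b = k then A $$ (i, a) else 0) else 0)"
    by (intro sum.cong) auto
  also have "\<dots> = (if b = k then A $$ (i, j) else 0)"
    using j by (subst sum.delta) auto
  finally show "(A * Emat n m j k) $$ (i, b) = mat p m (\<lambda>(i, b). if b = k then A $$ (i, j) else 0) $$ (i, b)"
    using i b by simp
qed (use A in \<open>auto simp: Emat_def\<close>)

lemma Emat_mult:
  assumes A: "A \<in> carrier_mat p n" and B: "B \<in> carrier_mat m q" and j: "j < n" and k: "k < m"
    and i: "i < p" and l: "l < q"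
  shows "(A * Emat n m j k * B) $$ (i, l) = A $$ (i, j) * B $$ (k, l)"
proof -
  have "(A * Emat n m j k * B) $$ (i, l) = (\<Sum>b\<in>{0..<m}. (if b = k then A $$ (i, j) else 0) * B $$ (b, l))"
    unfolding Emat_mult_left[OF A j k] using B i l by (simp add: scalar_prod_def)
  also have "\<dots> = (\<Sum>b\<in>{0..<m}. if b = k then A $$ (i, j) * B $$ (b, l) else 0)"
    by (intro sum.cong) auto
  also have "\<dots> = A $$ (i, j) * B $$ (k, l)" using k by (subst sum.delta) auto
  finally show ?thesis .
qed

lemma mat_trace_Emat: "i < n \<Longrightarrow> k < n \<Longrightarrow> mat_trace (Emat n n i k) = (if i = k then 1 else 0)"
  unfolding mat_trace_def Emat_def by (simp add: sum.delta[of "{..<n}" k "\<lambda>_. 1"] cong: if_cong)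

context group
begin

lemma avg_Emat:
  assumes r: "complex_rep G n \<rho>" and s: "complex_rep G m \<sigma>" and j: "j < n" and k: "k < m"
    and i: "i < n" and l: "l < m"
  shows "avg \<rho> \<sigma> n m (Emat n m j k) $$ (i, l) = (\<Sum>g\<in>carrier G. \<rho> g $$ (i, j) * \<sigma> (inv g) $$ (k, l))"
  unfolding avg_def using i l
  by (auto intro!: sum.cong Emat_mult[OF _ _ j k i l] rep_carrier[OF r] rep_carrier[OF s])

lemma char_sum_avg:
  assumes r: "complex_rep G n \<rho>" and s: "complex_rep G m \<sigma>"
  shows "(\<Sum>g\<in>carrier G. character G \<rho> g * character G \<sigma> (inv g))
       = (\<Sum>i<n. \<Sum>k<m. avg \<rho> \<sigma> n m (Emat n m i k) $$ (i, k))"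
proof -
  have "(\<Sum>g\<in>carrier G. character G \<rho> g * character G \<sigma> (inv g))
      = (\<Sum>g\<in>carrier G. (\<Sum>i<n. \<rho> g $$ (i, i)) * (\<Sum>k<m. \<sigma> (inv g) $$ (k, k)))"
  proof (intro sum.cong refl)
    fix g assume g: "g \<in> carrier G"
    have "dim_row (\<rho> g) = n" "dim_row (\<sigma> (inv g)) = m"
      using rep_carrier[OF r g] rep_carrier[OF s inv_closed[OF g]] by auto
    then show "character G \<rho> g * character G \<sigma> (inv g) = (\<Sum>i<n. \<rho> g $$ (i, i)) * (\<Sum>k<m. \<sigma> (inv g) $$ (k, k))"
      using g by (simp add: character_def mat_trace_def)
  qed
  also have "\<dots> = (\<Sum>g\<in>carrier G. \<Sum>i<n. \<Sum>k<m. \<rho> g $$ (i, i) * \<sigma> (inv g) $$ (k, k))"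
    by (simp add: sum_product)
  also have "\<dots> = (\<Sum>i<n. \<Sum>k<m. \<Sum>g\<in>carrier G. \<rho> g $$ (i, i) * \<sigma> (inv g) $$ (k, k))"
    by (subst sum.swap) (simp add: sum.swap[of _ "carrier G"])
  also have "\<dots> = (\<Sum>i<n. \<Sum>k<m. avg \<rho> \<sigma> n m (Emat n m i k) $$ (i, k))"
    using avg_Emat[OF r s] by simp
  finally show ?thesis .
qed

lemma orth_distinct:
  assumes ir: "irreducible_rep G n \<rho>" and irs: "irreducible_rep G m \<sigma>"
    and ne: "character G \<rho> \<noteq> character G \<sigma>"
  shows "(\<Sum>g\<in>carrier G. character G \<rho> g * character G \<sigma> (inv g)) = 0"
proof -
  have r: "complex_rep G n \<rho>" and s: "complex_rep G m \<sigma>" using ir irs by (auto intro: irr_rep)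
  have z: "avg \<rho> \<sigma> n m X = 0\<^sub>m n m" if X: "X \<in> carrier_mat n m" for X
  proof (rule ccontr)
    assume "avg \<rho> \<sigma> n m X \<noteq> 0\<^sub>m n m"
    from schur_char_eq[OF ir irs avg_carrier avg_intertwine[OF r s X] this] ne show False by simp
  qed
  have "\<And>i k. i < n \<Longrightarrow> k < m \<Longrightarrow> avg \<rho> \<sigma> n m (Emat n m i k) $$ (i, k) = 0"
    using z[OF Emat_carrier] by simp
  then show ?thesis unfolding char_sum_avg[OF r s] by simp
qed

lemma avg_trace:
  assumes r: "complex_rep G n \<rho>" and X: "X \<in> carrier_mat n n"
  shows "mat_trace (avg \<rho> \<rho> n n X) = of_nat (card (carrier G)) * mat_trace X"
proof -
  have cr: "\<And>g. g \<in> carrier G \<Longrightarrow> \<rho> g \<in> carrier_mat n n" using r by (rule rep_carrier)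
  have "mat_trace (avg \<rho> \<rho> n n X) = (\<Sum>i<n. \<Sum>g\<in>carrier G. (\<rho> g * X * \<rho> (inv g)) $$ (i, i))"
    unfolding mat_trace_def avg_def by simp
  also have "\<dots> = (\<Sum>g\<in>carrier G. mat_trace (\<rho> g * X * \<rho> (inv g)))"
    unfolding mat_trace_def using cr X by (subst sum.swap) (auto intro!: sum.cong)
  also have "\<dots> = (\<Sum>g\<in>carrier G. mat_trace X)"
  proof (intro sum.cong refl)
    fix g assume g: "g \<in> carrier G"
    have "mat_trace (\<rho> g * X * \<rho> (inv g)) = mat_trace (\<rho> (inv g) * (\<rho> g * X))"
      using cr[OF g] cr[OF inv_closed[OF g]] X by (intro mat_trace_mult_comm) auto
    also have "\<rho> (inv g) * (\<rho> g * X) = X"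
      using cr[OF g] cr[OF inv_closed[OF g]] X rep_inv_l[OF r g]
      by (simp add: assoc_mult_mat[symmetric])
    finally show "mat_trace (\<rho> g * X * \<rho> (inv g)) = mat_trace X" .
  qed
  also have "\<dots> = of_nat (card (carrier G)) * mat_trace X" by simp
  finally show ?thesis .
qed

lemma orth_same:
  assumes ir: "irreducible_rep G n \<rho>"
  shows "(\<Sum>g\<in>carrier G. character G \<rho> g * character G \<rho> (inv g)) = of_nat (card (carrier G))"
proof -
  have r: "complex_rep G n \<rho>" using ir by (rule irr_rep)
  have n: "n > 0" using r by (rule rep_pos)
  have e: "avg \<rho> \<rho> n n (Emat n n i k) $$ (i, k) = (if i = k then of_nat (card (carrier G)) / of_nat n else 0)"
    if i: "i < n" and k: "k < n" for i k
  proof -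
    obtain c where c: "avg \<rho> \<rho> n n (Emat n n i k) = c \<cdot>\<^sub>m 1\<^sub>m n"
      using schur_scalar[OF ir avg_carrier avg_intertwine[OF r r Emat_carrier]] by blast
    have "of_nat n * c = of_nat (card (carrier G)) * (if i = k then 1 else 0)"
      using avg_trace[OF r Emat_carrier[of n n i k]] unfolding c mat_trace_smult_one mat_trace_Emat[OF i k] .
    then have "c = (if i = k then of_nat (card (carrier G)) / of_nat n else 0)"
      using n by (auto simp: field_simps)
    then show ?thesis unfolding c using i k by simp
  qed
  have "(\<Sum>g\<in>carrier G. character G \<rho> g * character G \<rho> (inv g))
      = (\<Sum>i<n. \<Sum>k<n. if i = k then of_nat (card (carrier G)) / of_nat n else (0::complex))"
    unfolding char_sum_avg[OF r r] using e by simp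
  also have "\<dots> = (\<Sum>i<n. of_nat (card (carrier G)) / of_nat n)"
    by (intro sum.cong refl) (simp add: sum.delta)
  also have "\<dots> = of_nat (card (carrier G))" using n by simp
  finally show ?thesis .
qed

end


context group
begin

lemma regular_rep:
  assumes fin: "finite (carrier G)"
  shows "\<exists>\<rho>. complex_rep G (card (carrier G)) \<rho> \<and>
    (\<forall>g\<in>carrier G. character G \<rho> g = (if g = \<one> then of_nat (card (carrier G)) else 0))"
proof -
  define N where "N = card (carrier G)"
  obtain e where e: "bij_betw e {0..<N} (carrier G)"
    using ex_bij_betw_nat_finite[OF fin] unfolding N_def by blast
  have ec: "\<And>i. i < N \<Longrightarrow> e i \<in> carrier G" using e by (auto simp: bij_betw_def)
  have einj: "\<And>i j. i < N \<Longrightarrow> j < N \<Longrightarrow> e i = e j \<Longrightarrow> i = j"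
    using e by (auto simp: bij_betw_def inj_on_def)
  have esurj: "\<exists>k<N. e k = x" if x: "x \<in> carrier G" for x
  proof -
    have "x \<in> e ` {0..<N}" using e x by (simp add: bij_betw_def)
    then show ?thesis by auto
  qed
  have Npos: "N > 0" unfolding N_def using fin one_closed by (auto simp: card_gt_0_iff)
  define L where "L = (\<lambda>g. mat N N (\<lambda>(i, j). if e i = g \<otimes> e j then 1 else (0::complex)))"
  have Lc: "\<And>g. L g \<in> carrier_mat N N" unfolding L_def by simp
  have Lmult: "L (g \<otimes> h) = L g * L h" if g: "g \<in> carrier G" and h: "h \<in> carrier G" for g h
  proof (rule eq_matI)
    fix i j assume i: "i < dim_row (L g * L h)" and j: "j < dim_col (L g * L h)"
    then have i: "i < N" and j: "j < N" using Lc[of g] Lc[of h] by auto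
    obtain k0 where k0: "k0 < N" "e k0 = h \<otimes> e j" using esurj[of "h \<otimes> e j"] h ec[OF j] by auto
    have "(L g * L h) $$ (i, j) = (\<Sum>k\<in>{0..<N}. (if e i = g \<otimes> e k then 1 else 0) * (if e k = h \<otimes> e j then 1 else (0::complex)))"
      using i j unfolding L_def by (simp add: scalar_prod_def)
    also have "\<dots> = (\<Sum>k\<in>{0..<N}. if k = k0 then (if e i = g \<otimes> e k0 then 1 else 0) else (0::complex))"
    proof (intro sum.cong refl)
      fix k assume k: "k \<in> {0..<N}"
      have "e k = h \<otimes> e j \<longleftrightarrow> k = k0" using einj[of k k0] k k0 by auto
      then show "(if e i = g \<otimes> e k then 1 else 0) * (if e k = h \<otimes> e j then 1 else (0::complex)) =
        (if k = k0 then (if e i = g \<otimes> e k0 then 1 else 0) else 0)" by auto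
    qed
    also have "\<dots> = (if e i = g \<otimes> e k0 then 1 else 0)" using k0 by (subst sum.delta) auto
    also have "\<dots> = L (g \<otimes> h) $$ (i, j)"
      using i j k0 g h ec[OF j] unfolding L_def by (simp add: m_assoc)
    finally show "L (g \<otimes> h) $$ (i, j) = (L g * L h) $$ (i, j)" by simp
  qed (use Lc[of g] Lc[of h] Lc[of "g \<otimes> h"] in auto)
  have Lone: "L \<one> = 1\<^sub>m N"
    unfolding L_def by (rule eq_matI) (use einj ec in auto)
  have Linv: "invertible_mat (L g)" if g: "g \<in> carrier G" for g
  proof -
    have "L g * L (inv g) = 1\<^sub>m N" using Lmult[OF g inv_closed[OF g]] g Lone by simp
    moreover have "L (inv g) * L g = 1\<^sub>m N" using Lmult[OF inv_closed[OF g] g] g Lone by simp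
    ultimately show ?thesis unfolding invertible_mat_def inverts_mat_def using Lc[of g] Lc[of "inv g"]
      by (auto simp: square_mat.simps)
  qed
  have rep: "complex_rep G N L"
    unfolding complex_rep_def using Npos Lc Linv Lone Lmult by auto
  have tr: "character G L g = (if g = \<one> then of_nat N else 0)" if g: "g \<in> carrier G" for g
  proof -
    have "character G L g = (\<Sum>i<N. if e i = g \<otimes> e i then 1 else (0::complex))"
      using g unfolding character_def mat_trace_def L_def by simp
    also have "\<dots> = (\<Sum>i<N. if g = \<one> then 1 else (0::complex))"
    proof (intro sum.cong refl)
      fix i assume "i \<in> {..<N}"
      then have x: "e i \<in> carrier G" using ec by auto
      have "e i = g \<otimes> e i \<longleftrightarrow> g = \<one>"
        using x g by simp
      then show "(if e i = g \<otimes> e i then 1 else (0::complex)) = (if g = \<one> then 1 else 0)" by simp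
    qed
    also have "\<dots> = (if g = \<one> then of_nat N else 0)" by simp
    finally show ?thesis .
  qed
  show ?thesis using rep tr unfolding N_def by blast
qed

end


lemma right_inverse_from_surj:
  fixes P :: "complex mat"
  assumes P: "P \<in> carrier_mat n m"
    and s: "\<And>i. i < n \<Longrightarrow> \<exists>v. v \<in> carrier_vec m \<and> P *\<^sub>v v = unit_vec n i"
  shows "\<exists>Q. Q \<in> carrier_mat m n \<and> P * Q = 1\<^sub>m n"
proof -
  define c where "c = (\<lambda>i. SOME v. v \<in> carrier_vec m \<and> P *\<^sub>v v = unit_vec n i)"
  have c: "c i \<in> carrier_vec m \<and> P *\<^sub>v c i = unit_vec n i" if "i < n" for i
    unfolding c_def using s[OF that] by (rule someI_ex)
  define Q where "Q = mat m n (\<lambda>(j, i). c i $ j)"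
  have Qc: "Q \<in> carrier_mat m n" unfolding Q_def by simp
  have colQ: "col Q i = c i" if "i < n" for i
    using c[OF that] that unfolding Q_def by (auto simp: col_mat)
  have "P * Q = 1\<^sub>m n"
  proof (rule eq_matI)
    fix i j assume i: "i < dim_row (1\<^sub>m n :: complex mat)" and j: "j < dim_col (1\<^sub>m n :: complex mat)"
    then have i: "i < n" and j: "j < n" by auto
    have "(P * Q) $$ (i, j) = row P i \<bullet> col Q j" using P Qc i j by simp
    also have "\<dots> = (P *\<^sub>v c j) $ i" using colQ[OF j] P i by simp
    also have "\<dots> = unit_vec n j $ i" using c[OF j] by simp
    finally show "(P * Q) $$ (i, j) = 1\<^sub>m n $$ (i, j)" using i j by simp
  qed (use P Qc in auto)
  then show ?thesis using Qc by blast
qed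

lemma mat_of_cols_prefix:
  fixes as cs :: "complex vec list"
  assumes c: "c \<in> carrier_vec (length as)"
  shows "mat_of_cols n (as @ cs) *\<^sub>v vec (length as + length cs) (\<lambda>i. if i < length as then c $ i else 0)
       = mat_of_cols n as *\<^sub>v c"
proof (rule eq_vecI)
  fix i assume "i < dim_vec (mat_of_cols n as *\<^sub>v c)"
  then have i: "i < n" by simp
  let ?k = "length as" and ?l = "length cs"
  have "(mat_of_cols n (as @ cs) *\<^sub>v vec (?k + ?l) (\<lambda>i. if i < ?k then c $ i else 0)) $ i
      = (\<Sum>j\<in>{0..<?k + ?l}. (as @ cs) ! j $ i * (if j < ?k then c $ j else 0))"
    using i by (auto simp: scalar_prod_def mat_of_cols_index intro!: sum.cong)
  also have "\<dots> = (\<Sum>j\<in>{0..<?k}. (as @ cs) ! j $ i * (if j < ?k then c $ j else 0))"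
    by (rule sum.mono_neutral_right) auto
  also have "\<dots> = (\<Sum>j\<in>{0..<?k}. as ! j $ i * c $ j)"
    by (intro sum.cong) (auto simp: nth_append)
  also have "\<dots> = (mat_of_cols n as *\<^sub>v c) $ i"
    using i c by (auto simp: scalar_prod_def mat_of_cols_index intro!: sum.cong)
  finally show "(mat_of_cols n (as @ cs) *\<^sub>v vec (?k + ?l) (\<lambda>i. if i < ?k then c $ i else 0)) $ i
      = (mat_of_cols n as *\<^sub>v c) $ i" .
qed simp

context group
begin

lemma rep_intro:
  assumes k: "k > 0" and c: "\<And>g. g \<in> carrier G \<Longrightarrow> \<rho> g \<in> carrier_mat k k"
    and m: "\<And>g h. g \<in> carrier G \<Longrightarrow> h \<in> carrier G \<Longrightarrow> \<rho> (g \<otimes> h) = \<rho> g * \<rho> h"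
    and o: "\<rho> \<one> = 1\<^sub>m k"
  shows "complex_rep G k \<rho>"
  unfolding complex_rep_def
proof (intro conjI ballI k o m)
  fix g assume g: "g \<in> carrier G"
  show "\<rho> g \<in> carrier_mat k k" using c[OF g] .
  have "\<rho> g * \<rho> (inv g) = 1\<^sub>m k" using m[OF g inv_closed[OF g]] o g by simp
  moreover have "\<rho> (inv g) * \<rho> g = 1\<^sub>m k" using m[OF inv_closed[OF g] g] o g by simp
  ultimately show "invertible_mat (\<rho> g)"
    unfolding invertible_mat_def inverts_mat_def using c[OF g] c[OF inv_closed[OF g]]
    by (auto simp: square_mat.simps)
qed

lemma block_split:
  assumes Mc: "\<And>g. g \<in> carrier G \<Longrightarrow> M g \<in> carrier_mat n n"
    and Mm: "\<And>g h. g \<in> carrier G \<Longrightarrow> h \<in> carrier G \<Longrightarrow> M (g \<otimes> h) = M g * M h"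
    and M1: "M \<one> = 1\<^sub>m n"
    and Z: "\<And>g i j. g \<in> carrier G \<Longrightarrow> j < k \<Longrightarrow> k \<le> i \<Longrightarrow> i < n \<Longrightarrow> M g $$ (i, j) = 0"
    and k0: "0 < k" and kn: "k < n"
  shows "complex_rep G k (\<lambda>g. mat k k (\<lambda>(i, j). M g $$ (i, j)))"
    "complex_rep G (n - k) (\<lambda>g. mat (n - k) (n - k) (\<lambda>(i, j). M g $$ (i + k, j + k)))"
    "\<And>g. g \<in> carrier G \<Longrightarrow> mat_trace (M g) = mat_trace (mat k k (\<lambda>(i, j). M g $$ (i, j)))
        + mat_trace (mat (n - k) (n - k) (\<lambda>(i, j). M g $$ (i + k, j + k)))"
proof -
  show "complex_rep G k (\<lambda>g. mat k k (\<lambda>(i, j). M g $$ (i, j)))"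
  proof (rule rep_intro[OF k0])
    show "mat k k (\<lambda>(i, j). M \<one> $$ (i, j)) = 1\<^sub>m k" using M1 kn by (intro eq_matI) auto
    fix g h assume g: "g \<in> carrier G" and h: "h \<in> carrier G"
    show "mat k k (\<lambda>(i, j). M (g \<otimes> h) $$ (i, j)) = mat k k (\<lambda>(i, j). M g $$ (i, j)) * mat k k (\<lambda>(i, j). M h $$ (i, j))"
    proof (rule eq_matI)
      fix i j assume "i < dim_row (mat k k (\<lambda>(i, j). M g $$ (i, j)) * mat k k (\<lambda>(i, j). M h $$ (i, j)))"
        "j < dim_col (mat k k (\<lambda>(i, j). M g $$ (i, j)) * mat k k (\<lambda>(i, j). M h $$ (i, j)))"
      then have i: "i < k" and j: "j < k" by auto
      have "M (g \<otimes> h) $$ (i, j) = (\<Sum>l\<in>{0..<n}. M g $$ (i, l) * M h $$ (l, j))"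
        using Mm[OF g h] Mc[OF g] Mc[OF h] i j kn by (simp add: scalar_prod_def)
      also have "\<dots> = (\<Sum>l\<in>{0..<k}. M g $$ (i, l) * M h $$ (l, j))"
        by (rule sum.mono_neutral_right) (use kn Z[OF h] j in auto)
      finally show "mat k k (\<lambda>(i, j). M (g \<otimes> h) $$ (i, j)) $$ (i, j) =
         (mat k k (\<lambda>(i, j). M g $$ (i, j)) * mat k k (\<lambda>(i, j). M h $$ (i, j))) $$ (i, j)"
        using i j by (simp add: scalar_prod_def)
    qed auto
  qed auto
  show "complex_rep G (n - k) (\<lambda>g. mat (n - k) (n - k) (\<lambda>(i, j). M g $$ (i + k, j + k)))"
  proof (rule rep_intro)
    show "0 < n - k" using kn by simp
    show "mat (n - k) (n - k) (\<lambda>(i, j). M \<one> $$ (i + k, j + k)) = 1\<^sub>m (n - k)" using M1 kn by (intro eq_matI) auto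
    fix g h assume g: "g \<in> carrier G" and h: "h \<in> carrier G"
    show "mat (n - k) (n - k) (\<lambda>(i, j). M (g \<otimes> h) $$ (i + k, j + k)) =
      mat (n - k) (n - k) (\<lambda>(i, j). M g $$ (i + k, j + k)) * mat (n - k) (n - k) (\<lambda>(i, j). M h $$ (i + k, j + k))"
    proof (rule eq_matI)
      fix i j assume "i < dim_row (mat (n - k) (n - k) (\<lambda>(i, j). M g $$ (i + k, j + k)) * mat (n - k) (n - k) (\<lambda>(i, j). M h $$ (i + k, j + k)))"
        "j < dim_col (mat (n - k) (n - k) (\<lambda>(i, j). M g $$ (i + k, j + k)) * mat (n - k) (n - k) (\<lambda>(i, j). M h $$ (i + k, j + k)))"
      then have i: "i < n - k" and j: "j < n - k" by auto
      have "M (g \<otimes> h) $$ (i + k, j + k) = (\<Sum>l\<in>{0..<n}. M g $$ (i + k, l) * M h $$ (l, j + k))"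
        using Mm[OF g h] Mc[OF g] Mc[OF h] i j kn by (simp add: scalar_prod_def)
      also have "\<dots> = (\<Sum>l\<in>{k..<n}. M g $$ (i + k, l) * M h $$ (l, j + k))"
        by (rule sum.mono_neutral_right) (use kn Z[OF g] i in auto)
      also have "\<dots> = (\<Sum>l\<in>{0 + k..<(n - k) + k}. M g $$ (i + k, l) * M h $$ (l, j + k))"
        using kn by simp
      also have "\<dots> = (\<Sum>l\<in>{0..<n - k}. M g $$ (i + k, l + k) * M h $$ (l + k, j + k))"
        by (rule sum.shift_bounds_nat_ivl)
      finally show "mat (n - k) (n - k) (\<lambda>(i, j). M (g \<otimes> h) $$ (i + k, j + k)) $$ (i, j) =
         (mat (n - k) (n - k) (\<lambda>(i, j). M g $$ (i + k, j + k)) * mat (n - k) (n - k) (\<lambda>(i, j). M h $$ (i + k, j + k))) $$ (i, j)"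
        using i j by (simp add: scalar_prod_def)
    qed auto
  qed auto
  fix g assume g: "g \<in> carrier G"
  have "mat_trace (M g) = (\<Sum>i\<in>{0..<n}. M g $$ (i, i))"
    using Mc[OF g] unfolding mat_trace_def by (simp add: lessThan_atLeast0)
  also have "\<dots> = (\<Sum>i\<in>{0..<k}. M g $$ (i, i)) + (\<Sum>i\<in>{k..<n}. M g $$ (i, i))"
    using kn by (simp add: sum.atLeastLessThan_concat)
  also have "(\<Sum>i\<in>{k..<n}. M g $$ (i, i)) = (\<Sum>i\<in>{0 + k..<(n - k) + k}. M g $$ (i, i))"
    using kn by simp
  also have "\<dots> = (\<Sum>i\<in>{0..<n - k}. M g $$ (i + k, i + k))"
    by (rule sum.shift_bounds_nat_ivl)
  finally show "mat_trace (M g) = mat_trace (mat k k (\<lambda>(i, j). M g $$ (i, j)))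
        + mat_trace (mat (n - k) (n - k) (\<lambda>(i, j). M g $$ (i + k, j + k)))"
    unfolding mat_trace_def by (simp add: lessThan_atLeast0)
qed

end


context group
begin

lemma reduce:
  assumes r: "complex_rep G n \<rho>" and nirr: "\<not> irreducible_rep G n \<rho>"
  shows "\<exists>k \<rho>1 \<rho>2. 0 < k \<and> k < n \<and> complex_rep G k \<rho>1 \<and> complex_rep G (n - k) \<rho>2 \<and>
           (\<forall>g\<in>carrier G. character G \<rho> g = character G \<rho>1 g + character G \<rho>2 g)"
proof -
  have cr: "\<And>g. g \<in> carrier G \<Longrightarrow> \<rho> g \<in> carrier_mat n n" using r by (rule rep_carrier)
  obtain W where subW: "subspace_vec n W" and invW: "\<And>g w. g \<in> carrier G \<Longrightarrow> w \<in> W \<Longrightarrow> \<rho> g *\<^sub>v w \<in> W"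
    and W0: "W \<noteq> {0\<^sub>v n}" and WC: "W \<noteq> carrier_vec n"
    using nirr r unfolding irreducible_rep_def by blast
  interpret V: vec_space "TYPE(complex)" n .
  have Wc: "W \<subseteq> carrier_vec n" using subW unfolding subspace_vec_def by auto
  have subm: "submodule class_ring W V.V"
    using subW vec_module[where ?'a=complex and n=n] unfolding subspace_vec_def submodule_def
    by (auto simp: module_vec_simps class_ring_simps)
  define P1 where "P1 = (\<lambda>T. T \<subseteq> W \<and> V.lin_indpt T)"
  have P1b: "\<And>T. P1 T \<Longrightarrow> finite T \<and> card T \<le> n"
    unfolding P1_def using Wc V.li_le_dim V.dim_is_n V.fin_dim by (metis subset_trans)
  have P10: "P1 {}" unfolding P1_def V.lin_dep_def by auto
  obtain A where finA: "finite A" and maxA: "maximal A P1" using maximal_exists[of P1 n "{}", OF P1b P10] by blast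
  have AW: "A \<subseteq> W" and liA: "V.lin_indpt A" using maxA unfolding maximal_def P1_def by auto
  have Ac: "A \<subseteq> carrier_vec n" using AW Wc by auto
  have spanA: "V.span A = W"
  proof
    show "V.span A \<subseteq> W" by (rule V.span_is_subset[OF AW subm])
    show "W \<subseteq> V.span A"
    proof
      fix w assume w: "w \<in> W"
      show "w \<in> V.span A"
      proof (rule ccontr)
        assume nw: "w \<notin> V.span A"
        have wA: "w \<notin> A" using nw V.in_own_span[OF Ac] by auto
        have "\<not> V.lin_dep (A \<union> {w})"
          using V.lin_dep_iff_in_span[OF Ac liA _ wA] nw w Wc by auto
        then have "P1 (A \<union> {w})" unfolding P1_def using AW w by auto
        then have "A \<union> {w} = A" using maxA unfolding maximal_def by blast
        then show False using wA by auto
      qed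
    qed
  qed
  define P2 where "P2 = (\<lambda>T. A \<subseteq> T \<and> T \<subseteq> carrier_vec n \<and> V.lin_indpt T)"
  have P2b: "\<And>T. P2 T \<Longrightarrow> finite T \<and> card T \<le> n"
    unfolding P2_def using V.li_le_dim V.dim_is_n V.fin_dim by metis
  have P2A: "P2 A" unfolding P2_def using Ac liA by auto
  obtain B where finB: "finite B" and maxB: "maximal B P2" using maximal_exists[of P2 n A, OF P2b P2A] by blast
  have AB: "A \<subseteq> B" and Bc: "B \<subseteq> carrier_vec n" and liB: "V.lin_indpt B"
    using maxB unfolding maximal_def P2_def by auto
  have maxB': "maximal B (\<lambda>S. S \<subseteq> carrier_vec n \<and> V.lin_indpt S)"
    using maxB AB Bc liB unfolding maximal_def P2_def by auto
  have basB: "V.basis B" using V.max_li_is_basis maxB' by simp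
  have spanB: "V.span B = carrier_vec n" using basB unfolding V.basis_def by simp
  have cardB: "card B = n" using V.dim_basis[OF finB basB] V.dim_is_n by simp
  obtain as where as: "distinct as" "set as = A" using finite_distinct_list[OF finA] by blast
  obtain cs where cs: "distinct cs" "set cs = B - A" using finite_distinct_list[of "B - A"] finB by blast
  define bs where "bs = as @ cs"
  have bs: "distinct bs" "set bs = B" using as cs AB unfolding bs_def by auto
  have lenbs: "length bs = n" using bs cardB distinct_card by metis
  define k where "k = length as"
  have cardA: "card A = k" using as distinct_card unfolding k_def by metis
  have lencs: "length cs = n - k" using lenbs unfolding bs_def k_def by simp
  have k0: "0 < k"
  proof (rule ccontr)
    assume "\<not> 0 < k"
    then have "A = {}" using as unfolding k_def by simp
    then have "W = {0\<^sub>v n}" using spanA V.span_empty by simp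
    with W0 show False by simp
  qed
  have kn: "k < n"
  proof (rule ccontr)
    assume "\<not> k < n"
    then have "card A = card B" using cardA cardB card_mono[OF finB AB] by simp
    then have "A = B" using card_subset_eq[OF finB AB] by simp
    then have "W = carrier_vec n" using spanA spanB by simp
    with WC show False by simp
  qed
  define P where "P = mat_of_cols n bs"
  have bsc: "set bs \<subseteq> carrier_vec n" using bs Bc by simp
  have Pc: "P \<in> carrier_mat n n" unfolding P_def using lenbs mat_of_cols_carrier(1)[of n bs] by simp
  have colsP: "cols P = bs" unfolding P_def using bsc by (simp add: cols_mat_of_cols)
  have surjP: "\<exists>v. v \<in> carrier_vec n \<and> P *\<^sub>v v = unit_vec n i" if i: "i < n" for i
  proof -
    have "unit_vec n i \<in> V.span (set bs)" using spanB bs i by simp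
    from V.finite_in_span[OF _ bsc this] obtain a where a: "V.lincomb a (set bs) = unit_vec n i" by auto
    have "P *\<^sub>v vec n (\<lambda>i. a (col P i)) = V.lincomb a (set (cols P))"
      by (rule V.mat_mult_eq_lincomb[OF Pc]) (use colsP bs in simp)
    then show ?thesis using a colsP by (intro exI[of _ "vec n (\<lambda>i. a (col P i))"]) simp
  qed
  obtain Q where Qc: "Q \<in> carrier_mat n n" and PQ: "P * Q = 1\<^sub>m n"
    using right_inverse_from_surj[OF Pc surjP] by blast
  have QP: "Q * P = 1\<^sub>m n" by (rule mat_mult_left_right_inverse[OF Pc Qc PQ])
  define Pa where "Pa = mat_of_cols n as"
  have asc: "set as \<subseteq> carrier_vec n" using as Ac by simp
  have Pac: "Pa \<in> carrier_mat n k" unfolding Pa_def k_def using mat_of_cols_carrier(1)[of n as] by simp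
  have colsPa: "cols Pa = as" unfolding Pa_def using asc by (simp add: cols_mat_of_cols)
  have Pe: "P *\<^sub>v unit_vec n j = bs ! j" if j: "j < n" for j
  proof (rule eq_vecI)
    fix i assume "i < dim_vec (bs ! j)"
    then have i: "i < n" using bsc j lenbs by (metis carrier_vecD nth_mem subsetD)
    show "(P *\<^sub>v unit_vec n j) $ i = bs ! j $ i"
      using mat_vec_unit_index[OF Pc i j] i j lenbs unfolding P_def by (simp add: mat_of_cols_index)
  next
    have "bs ! j \<in> carrier_vec n" using bsc j lenbs nth_mem by blast
    then show "dim_vec (P *\<^sub>v unit_vec n j) = dim_vec (bs ! j)" using Pc by simp
  qed
  define M where "M = (\<lambda>g. Q * \<rho> g * P)"
  have Mc: "\<And>g. g \<in> carrier G \<Longrightarrow> M g \<in> carrier_mat n n" unfolding M_def using Qc Pc cr by auto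
  have Z: "M g $$ (i, j) = 0" if g: "g \<in> carrier G" and j: "j < k" and ki: "k \<le> i" and i: "i < n" for g i j
  proof -
    have jn: "j < n" using j kn by simp
    have "as ! j \<in> W" using AW as j nth_mem unfolding k_def by blast
    then have "\<rho> g *\<^sub>v (as ! j) \<in> W" using invW[OF g] by blast
    then have "\<rho> g *\<^sub>v (as ! j) \<in> V.span (set as)" using spanA as by simp
    from V.finite_in_span[OF _ asc this] obtain a where a: "V.lincomb a (set as) = \<rho> g *\<^sub>v (as ! j)" by auto
    define c where "c = vec k (\<lambda>i. a (col Pa i))"
    have cc: "c \<in> carrier_vec (length as)" unfolding c_def k_def by simp
    have "Pa *\<^sub>v c = V.lincomb a (set (cols Pa))"
      unfolding c_def by (rule V.mat_mult_eq_lincomb[OF Pac]) (use colsPa as in simp)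
    then have Pac': "Pa *\<^sub>v c = \<rho> g *\<^sub>v (as ! j)" using a colsPa by simp
    define c' where "c' = vec (length as + length cs) (\<lambda>i. if i < length as then c $ i else 0)"
    have c'c: "c' \<in> carrier_vec n" unfolding c'_def using lenbs bs_def by simp
    have Pc': "P *\<^sub>v c' = \<rho> g *\<^sub>v (as ! j)"
      unfolding P_def bs_def c'_def mat_of_cols_prefix[OF cc] using Pac' unfolding Pa_def .
    have bsj: "bs ! j = as ! j" unfolding bs_def using j k_def by (simp add: nth_append)
    have "M g *\<^sub>v unit_vec n j = (Q * \<rho> g) *\<^sub>v (P *\<^sub>v unit_vec n j)"
      unfolding M_def by (rule assoc_mult_mat_vec) (use Qc Pc cr[OF g] in auto)
    also have "\<dots> = Q *\<^sub>v (\<rho> g *\<^sub>v (P *\<^sub>v unit_vec n j))"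
      by (rule assoc_mult_mat_vec) (use Qc Pc cr[OF g] in auto)
    also have "\<dots> = Q *\<^sub>v (P *\<^sub>v c')" using Pe[OF jn] bsj Pc' by simp
    also have "\<dots> = c'" using Qc Pc c'c QP by (simp add: assoc_mult_mat_vec[symmetric])
    finally have "(M g *\<^sub>v unit_vec n j) $ i = c' $ i" by simp
    then show ?thesis using mat_vec_unit_index[OF Mc[OF g] i jn] ki i lenbs unfolding c'_def bs_def k_def by simp
  qed
  have Mm: "M (g \<otimes> h) = M g * M h" if g: "g \<in> carrier G" and h: "h \<in> carrier G" for g h
  proof -
    have rg: "\<rho> g \<in> carrier_mat n n" and rh: "\<rho> h \<in> carrier_mat n n" using cr g h by auto
    define X where "X = \<rho> h * P"
    have Xc: "X \<in> carrier_mat n n" unfolding X_def using rh Pc by simp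
    have gP: "\<rho> g * P \<in> carrier_mat n n" using rg Pc by simp
    have QX: "Q * X \<in> carrier_mat n n" using Qc Xc by simp
    have Meq: "\<And>x. x \<in> carrier G \<Longrightarrow> M x = Q * (\<rho> x * P)"
      unfolding M_def using Qc Pc cr by (auto intro: assoc_mult_mat)
    have "M g * M h = (Q * (\<rho> g * P)) * (Q * X)" unfolding Meq[OF g] Meq[OF h] X_def ..
    also have "\<dots> = Q * ((\<rho> g * P) * (Q * X))" by (rule assoc_mult_mat[OF Qc gP QX])
    also have "(\<rho> g * P) * (Q * X) = \<rho> g * (P * (Q * X))" by (rule assoc_mult_mat[OF rg Pc QX])
    also have "P * (Q * X) = (P * Q) * X" by (rule assoc_mult_mat[symmetric, OF Pc Qc Xc])
    also have "\<dots> = X" using PQ Xc by simp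
    also have "\<rho> g * X = (\<rho> g * \<rho> h) * P" unfolding X_def by (rule assoc_mult_mat[symmetric, OF rg rh Pc])
    also have "Q * \<dots> = M (g \<otimes> h)" unfolding Meq[OF m_closed[OF g h]] rep_mult[OF r g h] ..
    finally show ?thesis by simp
  qed
  have M1: "M \<one> = 1\<^sub>m n" unfolding M_def rep_one[OF r] using Qc Pc QP by simp
  have Mtr: "mat_trace (M g) = mat_trace (\<rho> g)" if g: "g \<in> carrier G" for g
  proof -
    have "mat_trace (M g) = mat_trace (P * (Q * \<rho> g))"
      unfolding M_def using Qc Pc cr[OF g] by (intro mat_trace_mult_comm) auto
    also have "P * (Q * \<rho> g) = \<rho> g" using Qc Pc cr[OF g] PQ by (simp add: assoc_mult_mat[symmetric])
    finally show ?thesis .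
  qed
  have bl1: "complex_rep G k (\<lambda>g. mat k k (\<lambda>(i, j). M g $$ (i, j)))"
    by (rule block_split(1)[of M n k], (rule Mc; assumption), (rule Mm; assumption), rule M1,
        (rule Z; assumption), rule k0, rule kn)
  have bl2: "complex_rep G (n - k) (\<lambda>g. mat (n - k) (n - k) (\<lambda>(i, j). M g $$ (i + k, j + k)))"
    by (rule block_split(2)[of M n k], (rule Mc; assumption), (rule Mm; assumption), rule M1,
        (rule Z; assumption), rule k0, rule kn)
  have bl3: "mat_trace (M g) = mat_trace (mat k k (\<lambda>(i, j). M g $$ (i, j)))
        + mat_trace (mat (n - k) (n - k) (\<lambda>(i, j). M g $$ (i + k, j + k)))" if g: "g \<in> carrier G" for g
    by (rule block_split(3)[of M n k], (rule Mc; assumption), (rule Mm; assumption), rule M1,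
        (rule Z; assumption), rule k0, rule kn, rule g)
  show ?thesis
  proof (intro exI conjI ballI)
    show "0 < k" "k < n" by (rule k0, rule kn)
    show "complex_rep G k (\<lambda>g. mat k k (\<lambda>(i, j). M g $$ (i, j)))" by (rule bl1)
    show "complex_rep G (n - k) (\<lambda>g. mat (n - k) (n - k) (\<lambda>(i, j). M g $$ (i + k, j + k)))" by (rule bl2)
    fix g assume g: "g \<in> carrier G"
    show "character G \<rho> g = character G (\<lambda>g. mat k k (\<lambda>(i, j). M g $$ (i, j))) g +
        character G (\<lambda>g. mat (n - k) (n - k) (\<lambda>(i, j). M g $$ (i + k, j + k))) g"
      unfolding character_def using g bl3[OF g] Mtr[OF g] by simp
  qed
qed

end


lemma sum_list_count:
  fixes f :: "'x \<Rightarrow> 'a::comm_semiring_1"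
  assumes "finite X" "set xs \<subseteq> X"
  shows "(\<Sum>\<psi>\<leftarrow>xs. f \<psi>) = (\<Sum>x\<in>X. of_nat (count_list xs x) * f x)"
  using assms(2)
proof (induction xs)
  case Nil then show ?case by simp
next
  case (Cons a xs)
  then have aX: "a \<in> X" and IH: "(\<Sum>\<psi>\<leftarrow>xs. f \<psi>) = (\<Sum>x\<in>X. of_nat (count_list xs x) * f x)" by auto
  have "(\<Sum>x\<in>X. of_nat (count_list (a # xs) x) * f x)
      = (\<Sum>x\<in>X. (if x = a then f x else 0) + of_nat (count_list xs x) * f x)"
    by (intro sum.cong) (auto simp: distrib_right)
  also have "\<dots> = f a + (\<Sum>x\<in>X. of_nat (count_list xs x) * f x)"
    using assms(1) aX by (simp add: sum.distrib sum.delta')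
  finally show ?case using IH by simp
qed

context group
begin

lemma decompose:
  assumes "complex_rep G n \<rho>"
  shows "\<exists>xs. set xs \<subseteq> Irr G \<and> (\<forall>g\<in>carrier G. character G \<rho> g = (\<Sum>\<psi>\<leftarrow>xs. \<psi> g))"
  using assms
proof (induction n arbitrary: \<rho> rule: less_induct)
  case (less n)
  show ?case
  proof (cases "irreducible_rep G n \<rho>")
    case True
    then have "character G \<rho> \<in> Irr G" unfolding Irr_def by blast
    then show ?thesis by (intro exI[of _ "[character G \<rho>]"]) auto
  next
    case False
    from reduce[OF less.prems False] obtain k \<rho>1 \<rho>2 where k: "0 < k" "k < n"
      and r1: "complex_rep G k \<rho>1" and r2: "complex_rep G (n - k) \<rho>2"
      and ch: "\<forall>g\<in>carrier G. character G \<rho> g = character G \<rho>1 g + character G \<rho>2 g" by blast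
    obtain xs1 where xs1: "set xs1 \<subseteq> Irr G" "\<forall>g\<in>carrier G. character G \<rho>1 g = (\<Sum>\<psi>\<leftarrow>xs1. \<psi> g)"
      using less.IH[OF k(2) r1] by blast
    obtain xs2 where xs2: "set xs2 \<subseteq> Irr G" "\<forall>g\<in>carrier G. character G \<rho>2 g = (\<Sum>\<psi>\<leftarrow>xs2. \<psi> g)"
      using less.IH[OF _ r2] k by auto
    show ?thesis using xs1 xs2 ch by (intro exI[of _ "xs1 @ xs2"]) auto
  qed
qed

lemma Irr_E:
  assumes "\<chi> \<in> Irr G"
  obtains n \<rho> where "irreducible_rep G n \<rho>" "\<chi> = character G \<rho>"
  using assms unfolding Irr_def by blast

lemma Irr_one: "\<chi> \<in> Irr G \<Longrightarrow> \<exists>n>0. \<chi> \<one> = of_nat n"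
  by (metis Irr_E irr_rep rep_pos character_one)

lemma Irr_orth:
  assumes "\<psi> \<in> Irr G" "\<chi> \<in> Irr G"
  shows "(\<Sum>g\<in>carrier G. \<psi> g * \<chi> (inv g)) = (if \<psi> = \<chi> then of_nat (card (carrier G)) else 0)"
proof -
  obtain n \<rho> where a: "irreducible_rep G n \<rho>" "\<psi> = character G \<rho>" using assms(1) by (rule Irr_E)
  obtain m \<sigma> where b: "irreducible_rep G m \<sigma>" "\<chi> = character G \<sigma>" using assms(2) by (rule Irr_E)
  show ?thesis
  proof (cases "\<psi> = \<chi>")
    case True then show ?thesis using orth_same[OF b(1)] b(2) by simp
  next
    case False then show ?thesis using orth_distinct[OF a(1) b(1)] a(2) b(2) by simp
  qed
qed

lemma Irr_complete:
  assumes fin: "finite (carrier G)"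
  shows "finite (Irr G)"
    "\<And>g. g \<in> carrier G \<Longrightarrow> (\<Sum>\<chi>\<in>Irr G. \<chi> \<one> * \<chi> g) = (if g = \<one> then of_nat (card (carrier G)) else 0)"
proof -
  define N where "N = card (carrier G)"
  obtain R where R: "complex_rep G N R"
    and chR: "\<forall>g\<in>carrier G. character G R g = (if g = \<one> then of_nat N else 0)"
    using regular_rep[OF fin] unfolding N_def by blast
  obtain xs where xs: "set xs \<subseteq> Irr G" and dec: "\<forall>g\<in>carrier G. character G R g = (\<Sum>\<psi>\<leftarrow>xs. \<psi> g)"
    using decompose[OF R] by blast
  have Npos: "N > 0" unfolding N_def using fin one_closed by (auto simp: card_gt_0_iff)
  have cnt: "of_nat (count_list xs \<chi>) = \<chi> \<one>" if chi: "\<chi> \<in> Irr G" for \<chi>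
  proof -
    have "(\<Sum>g\<in>carrier G. character G R g * \<chi> (inv g)) = of_nat N * \<chi> \<one>"
    proof -
      have "(\<Sum>g\<in>carrier G. character G R g * \<chi> (inv g)) = (\<Sum>g\<in>carrier G. if g = \<one> then of_nat N * \<chi> \<one> else 0)"
        using chR by (intro sum.cong) auto
      also have "\<dots> = of_nat N * \<chi> \<one>" using fin by (simp add: sum.delta')
      finally show ?thesis .
    qed
    moreover have "(\<Sum>g\<in>carrier G. character G R g * \<chi> (inv g)) = of_nat N * of_nat (count_list xs \<chi>)"
    proof -
      have "(\<Sum>g\<in>carrier G. character G R g * \<chi> (inv g))
          = (\<Sum>g\<in>carrier G. \<Sum>\<psi>\<in>set xs. of_nat (count_list xs \<psi>) * \<psi> g * \<chi> (inv g))"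
        using dec by (intro sum.cong refl) (simp add: sum_list_count[of "set xs" xs] sum_distrib_right)
      also have "\<dots> = (\<Sum>\<psi>\<in>set xs. of_nat (count_list xs \<psi>) * (\<Sum>g\<in>carrier G. \<psi> g * \<chi> (inv g)))"
        by (subst sum.swap) (simp add: sum_distrib_left mult.assoc)
      also have "\<dots> = (\<Sum>\<psi>\<in>set xs. of_nat (count_list xs \<psi>) * (if \<psi> = \<chi> then of_nat N else 0))"
        using xs chi Irr_orth unfolding N_def by (intro sum.cong refl) auto
      also have "\<dots> = (\<Sum>\<psi>\<in>set xs. if \<psi> = \<chi> then of_nat (count_list xs \<chi>) * of_nat N else 0)"
        by (intro sum.cong refl) auto
      also have "\<dots> = of_nat N * of_nat (count_list xs \<chi>)"
        by (cases "\<chi> \<in> set xs") (auto simp: count_list_0_iff)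
      finally show ?thesis .
    qed
    ultimately show ?thesis using Npos by simp
  qed
  have IrrEq: "Irr G = set xs"
  proof
    show "set xs \<subseteq> Irr G" by (rule xs)
    show "Irr G \<subseteq> set xs"
    proof
      fix \<chi> assume chi: "\<chi> \<in> Irr G"
      obtain m where "m > 0" "\<chi> \<one> = of_nat m" using Irr_one[OF chi] by blast
      then have "count_list xs \<chi> \<noteq> 0" using cnt[OF chi] by auto
      then show "\<chi> \<in> set xs" by (simp add: count_list_0_iff)
    qed
  qed
  show "finite (Irr G)" unfolding IrrEq by simp
  fix g assume g: "g \<in> carrier G"
  have "(\<Sum>\<chi>\<in>Irr G. \<chi> \<one> * \<chi> g) = (\<Sum>\<chi>\<in>set xs. of_nat (count_list xs \<chi>) * \<chi> g)"
    unfolding IrrEq using cnt xs by (intro sum.cong refl) auto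
  also have "\<dots> = (\<Sum>\<psi>\<leftarrow>xs. \<psi> g)" by (rule sum_list_count[symmetric]) auto
  also have "\<dots> = character G R g" using dec g by simp
  also have "\<dots> = (if g = \<one> then of_nat N else 0)" using chR g by simp
  finally show "(\<Sum>\<chi>\<in>Irr G. \<chi> \<one> * \<chi> g) = (if g = \<one> then of_nat (card (carrier G)) else 0)"
    unfolding N_def .
qed

end


context group
begin

lemma centre_sub: "group_centre G \<subseteq> carrier G"
  unfolding group_centre_def by auto

lemma centre_one: "\<one> \<in> group_centre G"
  unfolding group_centre_def by auto

lemma centre_comm: "z \<in> group_centre G \<Longrightarrow> g \<in> carrier G \<Longrightarrow> z \<otimes> g = g \<otimes> z"
  unfolding group_centre_def by auto

lemma centre_mult:
  assumes z: "z \<in> group_centre G" and w: "w \<in> group_centre G"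
  shows "z \<otimes> w \<in> group_centre G"
proof -
  have zc: "z \<in> carrier G" and wc: "w \<in> carrier G" using z w centre_sub by auto
  have "(z \<otimes> w) \<otimes> g = g \<otimes> (z \<otimes> w)" if g: "g \<in> carrier G" for g
  proof -
    have "(z \<otimes> w) \<otimes> g = z \<otimes> (w \<otimes> g)" using zc wc g by (rule m_assoc)
    also have "\<dots> = z \<otimes> (g \<otimes> w)" using centre_comm[OF w g] by simp
    also have "\<dots> = (z \<otimes> g) \<otimes> w" using zc wc g by (simp add: m_assoc)
    also have "\<dots> = (g \<otimes> z) \<otimes> w" using centre_comm[OF z g] by simp
    also have "\<dots> = g \<otimes> (z \<otimes> w)" using g zc wc by (rule m_assoc)
    finally show ?thesis .
  qed
  then show ?thesis unfolding group_centre_def using zc wc by auto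
qed

lemma centre_inv: "z \<in> group_centre G \<Longrightarrow> inv z \<in> group_centre G"
proof -
  assume z: "z \<in> group_centre G"
  then have zc: "z \<in> carrier G" by (rule subsetD[OF centre_sub])
  have "inv z \<otimes> g = g \<otimes> inv z" if g: "g \<in> carrier G" for g
  proof -
    have e1: "z \<otimes> (inv z \<otimes> g) = g" using zc g by (simp add: m_assoc[symmetric])
    have "z \<otimes> (g \<otimes> inv z) = (z \<otimes> g) \<otimes> inv z" using zc g by (simp add: m_assoc)
    also have "\<dots> = (g \<otimes> z) \<otimes> inv z" using centre_comm[OF z g] by simp
    also have "\<dots> = g" using zc g by (simp add: m_assoc)
    finally have "z \<otimes> (inv z \<otimes> g) = z \<otimes> (g \<otimes> inv z)" using e1 by simp
    then show ?thesis using zc g by simp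
  qed
  then show ?thesis unfolding group_centre_def using zc by auto
qed

lemma centre_bij: "z \<in> group_centre G \<Longrightarrow> bij_betw (\<lambda>w. z \<otimes> w) (group_centre G) (group_centre G)"
proof -
  assume z: "z \<in> group_centre G"
  then have zc: "z \<in> carrier G" by (rule subsetD[OF centre_sub])
  show ?thesis unfolding bij_betw_def
  proof
    show "inj_on ((\<otimes>) z) (group_centre G)"
    proof (rule inj_onI)
      fix x y assume "x \<in> group_centre G" "y \<in> group_centre G" "z \<otimes> x = z \<otimes> y"
      then show "x = y" using zc centre_sub by (metis Units_eq Units_l_cancel subsetD)
    qed
    show "(\<otimes>) z ` group_centre G = group_centre G"
    proof
      show "(\<otimes>) z ` group_centre G \<subseteq> group_centre G" using z centre_mult by auto
      show "group_centre G \<subseteq> (\<otimes>) z ` group_centre G"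
      proof
        fix x assume x: "x \<in> group_centre G"
        then have xc: "x \<in> carrier G" using centre_sub by auto
        have "x = z \<otimes> (inv z \<otimes> x)" using zc xc by (simp add: m_assoc[symmetric])
        moreover have "inv z \<otimes> x \<in> group_centre G" using centre_mult[OF centre_inv[OF z] x] .
        ultimately show "x \<in> (\<otimes>) z ` group_centre G" by blast
      qed
    qed
  qed
qed

lemma Irr_centre_mult:
  assumes chi: "\<chi> \<in> Irr G" and z: "z \<in> group_centre G" and w: "w \<in> group_centre G"
  shows "\<chi> \<one> * \<chi> (z \<otimes> w) = \<chi> z * \<chi> w"
proof -
  obtain n \<rho> where ir: "irreducible_rep G n \<rho>" and ch: "\<chi> = character G \<rho>" using chi by (rule Irr_E)
  have r: "complex_rep G n \<rho>" using ir by (rule irr_rep)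
  have zc: "z \<in> carrier G" and wc: "w \<in> carrier G" using z w centre_sub by auto
  have sc: "\<exists>c. \<rho> x = c \<cdot>\<^sub>m 1\<^sub>m n" if x: "x \<in> group_centre G" for x
  proof -
    have xc: "x \<in> carrier G" using x centre_sub by auto
    show ?thesis
    proof (rule schur_scalar[OF ir rep_carrier[OF r xc]])
      fix h assume h: "h \<in> carrier G"
      show "\<rho> h * \<rho> x = \<rho> x * \<rho> h"
        using rep_mult[OF r h xc] rep_mult[OF r xc h] centre_comm[OF x h] by simp
    qed
  qed
  obtain c where c: "\<rho> z = c \<cdot>\<^sub>m 1\<^sub>m n" using sc[OF z] by blast
  obtain d where d: "\<rho> w = d \<cdot>\<^sub>m 1\<^sub>m n" using sc[OF w] by blast
  have "\<rho> (z \<otimes> w) = (c * d) \<cdot>\<^sub>m 1\<^sub>m n"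
    unfolding rep_mult[OF r zc wc] c d
    by (simp add: mult_smult_assoc_mat[of "1\<^sub>m n" n n "d \<cdot>\<^sub>m 1\<^sub>m n" n]) (intro eq_matI; auto)
  then show ?thesis
    unfolding ch character_def using zc wc c d rep_one[OF r] by (simp add: mat_trace_smult_one)
qed

lemma centre_sum:
  assumes fin: "finite (carrier G)" and chi: "\<chi> \<in> Irr G" and psi: "\<psi> \<in> Irr G"
  shows "\<exists>s::real. s \<ge> 0 \<and> (\<Sum>z\<in>group_centre G. \<chi> z * cnj (\<psi> z)) = \<chi> \<one> * \<psi> \<one> * of_real s"
proof -
  define Z where "Z = group_centre G"
  have finZ: "finite Z" unfolding Z_def by (rule finite_subset[OF centre_sub fin])
  obtain n where n: "n > 0" "\<chi> \<one> = of_nat n" using Irr_one[OF chi] by blast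
  obtain m where m: "m > 0" "\<psi> \<one> = of_nat m" using Irr_one[OF psi] by blast
  define lam where "lam = (\<lambda>z. (\<chi> z / \<chi> \<one>) * cnj (\<psi> z / \<psi> \<one>))"
  have lam_mult: "lam (z \<otimes> w) = lam z * lam w" if z: "z \<in> Z" and w: "w \<in> Z" for z w
  proof -
    have a: "\<chi> (z \<otimes> w) / \<chi> \<one> = (\<chi> z / \<chi> \<one>) * (\<chi> w / \<chi> \<one>)"
      using Irr_centre_mult[OF chi] z w n unfolding Z_def by (simp add: field_simps)
    have b: "\<psi> (z \<otimes> w) / \<psi> \<one> = (\<psi> z / \<psi> \<one>) * (\<psi> w / \<psi> \<one>)"
      using Irr_centre_mult[OF psi] z w m unfolding Z_def by (simp add: field_simps)
    show ?thesis unfolding lam_def a b complex_cnj_mult by (simp only: mult.assoc mult.left_commute)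
  qed
  have eq: "(\<Sum>z\<in>Z. \<chi> z * cnj (\<psi> z)) = \<chi> \<one> * \<psi> \<one> * (\<Sum>z\<in>Z. lam z)"
    unfolding lam_def sum_distrib_left
  proof (intro sum.cong refl)
    fix z
    have "cnj (\<psi> z / \<psi> \<one>) = cnj (\<psi> z) / of_nat m" using m by (simp add: complex_cnj_divide)
    then show "\<chi> z * cnj (\<psi> z) = \<chi> \<one> * \<psi> \<one> * (\<chi> z / \<chi> \<one> * cnj (\<psi> z / \<psi> \<one>))"
      using n m by simp
  qed
  have "(\<Sum>z\<in>Z. lam z) = 0 \<or> (\<Sum>z\<in>Z. lam z) = of_nat (card Z)"
  proof (cases "\<forall>z\<in>Z. lam z = 1")
    case True then show ?thesis by simp
  next
    case False
    then obtain z0 where z0: "z0 \<in> Z" "lam z0 \<noteq> 1" by blast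
    have "(\<Sum>z\<in>Z. lam z) = (\<Sum>z\<in>Z. lam (z0 \<otimes> z))"
      using sum.reindex_bij_betw[OF centre_bij[OF z0(1)[unfolded Z_def]], of lam] unfolding Z_def by simp
    also have "\<dots> = lam z0 * (\<Sum>z\<in>Z. lam z)"
      unfolding sum_distrib_left using lam_mult z0 by simp
    finally have "(1 - lam z0) * (\<Sum>z\<in>Z. lam z) = 0" by (simp add: algebra_simps)
    then show ?thesis using z0 by simp
  qed
  then obtain s :: real where s: "s \<ge> 0" "(\<Sum>z\<in>Z. lam z) = of_real s"
  proof
    assume "(\<Sum>z\<in>Z. lam z) = 0"
    then show thesis using that[of 0] by simp
  next
    assume "(\<Sum>z\<in>Z. lam z) = of_nat (card Z)"
    then show thesis using that[of "real (card Z)"] by simp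
  qed
  show ?thesis
    by (rule exI[of _ s], rule conjI[OF s(1)]) (use eq s(2) in \<open>simp add: Z_def\<close>)
qed

lemma main_identity:
  assumes fin: "finite (carrier G)"
  shows "(\<Sum>\<chi>\<in>Irr G. \<Sum>\<chi>'\<in>Irr G. char_degree G \<chi> * char_degree G \<chi>' *
        complex_of_real (cmod (\<Sum>x\<in>group_centre G. \<chi> x * cnj (\<chi>' x))))
      = of_nat (card (carrier G)) ^ 2"
proof -
  define N where "N = card (carrier G)"
  define Z where "Z = group_centre G"
  have finZ: "finite Z" unfolding Z_def by (rule finite_subset[OF centre_sub fin])
  have Zc: "Z \<subseteq> carrier G" unfolding Z_def by (rule centre_sub)
  have oneZ: "\<one> \<in> Z" unfolding Z_def by (rule centre_one)
  have deg_real: "cnj (\<chi> \<one>) = \<chi> \<one>" if "\<chi> \<in> Irr G" for \<chi>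
    using Irr_one[OF that] by auto
  have abs_eq: "complex_of_real (cmod (\<Sum>x\<in>Z. \<chi> x * cnj (\<chi>' x))) = (\<Sum>x\<in>Z. \<chi> x * cnj (\<chi>' x))"
    if chi: "\<chi> \<in> Irr G" and chi': "\<chi>' \<in> Irr G" for \<chi> \<chi>'
  proof -
    obtain s :: real where s: "s \<ge> 0" "(\<Sum>x\<in>Z. \<chi> x * cnj (\<chi>' x)) = \<chi> \<one> * \<chi>' \<one> * of_real s"
      using centre_sum[OF fin chi chi'] unfolding Z_def by blast
    obtain n where n: "\<chi> \<one> = of_nat n" using Irr_one[OF chi] by blast
    obtain m where m: "\<chi>' \<one> = of_nat m" using Irr_one[OF chi'] by blast
    have "(\<Sum>x\<in>Z. \<chi> x * cnj (\<chi>' x)) = of_real (real n * real m * s)" using s(2) n m by simp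
    moreover have "real n * real m * s \<ge> 0" using s(1) by simp
    ultimately show ?thesis by (simp only: norm_of_real) simp
  qed
  have compl: "(\<Sum>\<chi>'\<in>Irr G. \<chi>' \<one> * cnj (\<chi>' x)) = (if x = \<one> then of_nat N else 0)" if x: "x \<in> carrier G" for x
  proof -
    have "(\<Sum>\<chi>'\<in>Irr G. \<chi>' \<one> * cnj (\<chi>' x)) = cnj (\<Sum>\<chi>'\<in>Irr G. \<chi>' \<one> * \<chi>' x)"
      using deg_real by (simp add: cnj_sum)
    also have "\<dots> = (if x = \<one> then of_nat N else 0)" using Irr_complete(2)[OF fin x] unfolding N_def by simp
    finally show ?thesis .
  qed
  have "(\<Sum>\<chi>\<in>Irr G. \<Sum>\<chi>'\<in>Irr G. char_degree G \<chi> * char_degree G \<chi>' *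
        complex_of_real (cmod (\<Sum>x\<in>Z. \<chi> x * cnj (\<chi>' x))))
      = (\<Sum>\<chi>\<in>Irr G. \<Sum>\<chi>'\<in>Irr G. \<chi> \<one> * \<chi>' \<one> * (\<Sum>x\<in>Z. \<chi> x * cnj (\<chi>' x)))"
    unfolding char_degree_def using abs_eq by (intro sum.cong refl) simp
  also have "\<dots> = (\<Sum>\<chi>\<in>Irr G. \<Sum>\<chi>'\<in>Irr G. \<Sum>x\<in>Z. \<chi> \<one> * (\<chi> x * (\<chi>' \<one> * cnj (\<chi>' x))))"
    by (simp add: sum_distrib_left mult_ac)
  also have "\<dots> = (\<Sum>\<chi>\<in>Irr G. \<Sum>x\<in>Z. \<Sum>\<chi>'\<in>Irr G. \<chi> \<one> * (\<chi> x * (\<chi>' \<one> * cnj (\<chi>' x))))"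
    by (intro sum.cong refl) (rule sum.swap)
  also have "\<dots> = (\<Sum>\<chi>\<in>Irr G. \<chi> \<one> * (\<Sum>x\<in>Z. \<chi> x * (\<Sum>\<chi>'\<in>Irr G. \<chi>' \<one> * cnj (\<chi>' x))))"
    by (simp add: sum_distrib_left)
  also have "\<dots> = (\<Sum>\<chi>\<in>Irr G. \<chi> \<one> * (\<Sum>x\<in>Z. \<chi> x * (if x = \<one> then of_nat N else 0)))"
    using compl Zc by (intro sum.cong refl arg_cong2[where f="(*)"]) auto
  also have "\<dots> = (\<Sum>\<chi>\<in>Irr G. of_nat N * (\<chi> \<one> * \<chi> \<one>))"
    using finZ oneZ by (intro sum.cong refl) (simp add: if_distrib sum.delta' cong: if_cong)
  also have "\<dots> = of_nat N * (\<Sum>\<chi>\<in>Irr G. \<chi> \<one> * \<chi> \<one>)" by (simp add: sum_distrib_left)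
  also have "(\<Sum>\<chi>\<in>Irr G. \<chi> \<one> * \<chi> \<one>) = of_nat N" using Irr_complete(2)[OF fin one_closed] unfolding N_def by simp
  finally show ?thesis unfolding N_def Z_def by (simp add: power2_eq_square)
qed

end

theorem lemma4p3:
  fixes G :: "('a, 'b) monoid_scheme"
  assumes "group G" and "finite (carrier G)"
  shows "(1 / (of_nat (card (carrier G)))^2) *
    (\<Sum>\<chi>\<in>Irr G. \<Sum>\<chi>'\<in>Irr G. char_degree G \<chi> * char_degree G \<chi>' *
        complex_of_real (cmod (\<Sum>x\<in>group_centre G. \<chi> x * cnj (\<chi>' x)))) = (1::complex)"
proof -
  interpret group G by (rule assms(1))
  have "card (carrier G) > 0" using assms(2) one_closed by (auto simp: card_gt_0_iff)
  then show ?thesis unfolding main_identity[OF assms(2)] by simp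
qed


end
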